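(* Let $\mathcal{F}$ be a projective Fraïssé family of finite trees whose distinguished epimorphisms are monotone and weakly coherent, and which allows splitting edges. Let $\mathbb{F}$ be its projective Fraïssé limit. If $e$ is an endpoint of $\mathbb{F}$, then there is no $f\in\mathbb{F}\setminus\{e\}$ with $\langle e,f\rangle\in E(\mathbb{F})$.
   Context: Graphs have reflexive symmetric edge relations; topological graphs carry a compact, Hausdorff, zero-dimensional, second countable topology with closed edge set; finite graphs are discrete. An epimorphism $g\colon B\to A$ is a continuous surjection with $\langle a_1,a_2\rangle\in E(A)$ iff some $b_i\in g^{-1}(a_i)$ satisfy $\langle b_1,b_2\rangle\in E(B)$. A topological graph is disconnected if its vertex set splits into two nonempty disjoint closed sets with no edges between them, connected otherwise (subsets carry induced edges and subspace topology). Monotone: every fibre is connected. A topological graph is an arc if it is connected and removing any vertex, except at most two vertices (the endpoints of the arc), disconnects it. An embedding of topological graphs is an injective continuous map that is a homeomorphism onto its image and preserves and reflects edges. A vertex $x$ of a topological graph $G$ is an endpoint of $G$ if whenever $H$ is an arc and $f\colon H\to G$ an embedding with $x$ in its image, $x$ is the image of an endpoint of $H$. In a finite tree, $\mathrm{ord}(a)$ is the number of neighbours other than $a$. For monotone $f\colon B\to A$ of finite trees, $a\in A$ with $\mathrm{ord}(a)=n\ge3$ is a point of weak coherence (witnessed by $b$) if $b\in f^{-1}(a)$, $\mathrm{ord}(b)=m\ge n$ and an injection $p\colon n\to m$ satisfies $f^{-1}(A_i)\subseteq B_{p(i)}$ ($A_i$, $B_j$ the components of $A\setminus\{a\}$,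 $B\setminus\{b\}$); $f$ is weakly coherent if this holds at every vertex of order $\ge3$. A projective Fraïssé family: class of finite graphs with distinguished epimorphisms, countably many up to isomorphism, containing identities, closed under composition, with joint projection and projective amalgamation. A Fraïssé sequence: compatible distinguished epimorphisms $f^m_n\colon F_m\to F_n$ such that each member is the image of some $F_n$, and every distinguished $f\colon A\to F_m$ satisfies $f\circ g=f^n_m$ for some $n\ge m$ and distinguished $g\colon F_n\to A$. The projective Fraïssé limit is $\varprojlim F_n\subseteq\prod F_n$ with coordinatewise edges. Allowing splitting edges: for each member $G$ and nontrivial edge $\{a,b\}$, replacing it by a path $a,\ast,b$ through a new vertex yields a member, and the two maps collapsing $\ast$ to $a$, resp. $b$ (identity elsewhere) are distinguished. *)

theory Defs
  imports "HOL-Analysis.Analysis"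
begin

type_synonym fgraph = "nat set \<times> (nat \<times> nat) set"

definition gV :: "fgraph \<Rightarrow> nat set" where "gV G = fst G"
definition gE :: "fgraph \<Rightarrow> (nat \<times> nat) set" where "gE G = snd G"

definition is_fgraph :: "fgraph \<Rightarrow> bool" where
  "is_fgraph G \<longleftrightarrow> finite (gV G) \<and> gE G \<subseteq> gV G \<times> gV G
     \<and> (\<forall>v\<in>gV G. (v,v) \<in> gE G) \<and> (\<forall>a b. (a,b) \<in> gE G \<longrightarrow> (b,a) \<in> gE G)"

text \<open>connectedness of a vertex subset S (induced edges; finite graphs are discrete,
  so every subset is closed)\<close>
definition set_connected :: "('a \<times> 'a) set \<Rightarrow> 'a set \<Rightarrow> bool" where
  "set_connected E S \<longleftrightarrow> \<not> (\<exists>A B. A \<noteq> {} \<and> B \<noteq> {} \<and> A \<inter> B = {} \<and> A \<union> B = S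
       \<and> (\<forall>a\<in>A. \<forall>b\<in>B. (a,b) \<notin> E))"

definition components_of :: "('a \<times> 'a) set \<Rightarrow> 'a set \<Rightarrow> 'a set set" where
  "components_of E S = {C. C \<subseteq> S \<and> C \<noteq> {} \<and> set_connected E C
       \<and> (\<forall>D. C \<subseteq> D \<and> D \<subseteq> S \<and> set_connected E D \<longrightarrow> D = C)}"

definition has_cycle :: "fgraph \<Rightarrow> bool" where
  "has_cycle G \<longleftrightarrow> (\<exists>xs. length xs \<ge> 3 \<and> distinct xs \<and> set xs \<subseteq> gV G
       \<and> (\<forall>i. Suc i < length xs \<longrightarrow> (xs ! i, xs ! Suc i) \<in> gE G)
       \<and> (last xs, hd xs) \<in> gE G)"

definition is_ftree :: "fgraph \<Rightarrow> bool" where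
  "is_ftree G \<longleftrightarrow> is_fgraph G \<and> set_connected (gE G) (gV G) \<and> \<not> has_cycle G"

text \<open>epimorphism f : B \<rightarrow> A (continuity is automatic for discrete graphs)\<close>
definition is_epi :: "(nat \<Rightarrow> nat) \<Rightarrow> fgraph \<Rightarrow> fgraph \<Rightarrow> bool" where
  "is_epi f B A \<longleftrightarrow> f ` gV B = gV A \<and>
     (\<forall>a1\<in>gV A. \<forall>a2\<in>gV A. (a1,a2) \<in> gE A \<longleftrightarrow>
        (\<exists>b1\<in>gV B. \<exists>b2\<in>gV B. f b1 = a1 \<and> f b2 = a2 \<and> (b1,b2) \<in> gE B))"

definition fibre :: "(nat \<Rightarrow> nat) \<Rightarrow> fgraph \<Rightarrow> nat \<Rightarrow> nat set" where
  "fibre f B a = {b \<in> gV B. f b = a}"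

definition monotone_epi :: "(nat \<Rightarrow> nat) \<Rightarrow> fgraph \<Rightarrow> fgraph \<Rightarrow> bool" where
  "monotone_epi f B A \<longleftrightarrow> (\<forall>a\<in>gV A. set_connected (gE B) (fibre f B a))"

definition ord :: "fgraph \<Rightarrow> nat \<Rightarrow> nat" where
  "ord G a = card {x \<in> gV G. x \<noteq> a \<and> (a,x) \<in> gE G}"

text \<open>point of weak coherence, witnessed by b; the injection p : n \<rightarrow> m between the
  enumerated components is expressed as an injection between the sets of components\<close>
definition weak_coherence_witness :: "(nat \<Rightarrow> nat) \<Rightarrow> fgraph \<Rightarrow> fgraph \<Rightarrow> nat \<Rightarrow> nat \<Rightarrow> bool" where
  "weak_coherence_witness f B A a b \<longleftrightarrow> a \<in> gV A \<and> ord A a \<ge> 3 \<and> b \<in> fibre f B a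
     \<and> ord B b \<ge> ord A a
     \<and> (\<exists>p. inj_on p (components_of (gE A) (gV A - {a}))
          \<and> (\<forall>C\<in>components_of (gE A) (gV A - {a}).
                p C \<in> components_of (gE B) (gV B - {b})
              \<and> {x \<in> gV B. f x \<in> C} \<subseteq> p C))"

definition weakly_coherent :: "(nat \<Rightarrow> nat) \<Rightarrow> fgraph \<Rightarrow> fgraph \<Rightarrow> bool" where
  "weakly_coherent f B A \<longleftrightarrow>
     (\<forall>a\<in>gV A. ord A a \<ge> 3 \<longrightarrow> (\<exists>b. weak_coherence_witness f B A a b))"

text \<open>A family: a class K of finite graphs and a set D of distinguished epimorphisms,
  (f, B, A) \<in> D meaning f : B \<rightarrow> A. Countably many up to isomorphism is automatic
  since vertices are natural numbers.\<close>
definition proj_fraisse_family :: "fgraph set \<Rightarrow> ((nat \<Rightarrow> nat) \<times> fgraph \<times> fgraph) set \<Rightarrow> bool" where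
  "proj_fraisse_family K D \<longleftrightarrow>
     (\<forall>A\<in>K. is_fgraph A)
   \<and> (\<forall>(f,B,A)\<in>D. B \<in> K \<and> A \<in> K \<and> is_epi f B A)
   \<and> (\<forall>A\<in>K. (id, A, A) \<in> D)
   \<and> (\<forall>f g A B C. (g, C, B) \<in> D \<and> (f, B, A) \<in> D \<longrightarrow> (f \<circ> g, C, A) \<in> D)
   \<and> (\<forall>A\<in>K. \<forall>B\<in>K. \<exists>C\<in>K. \<exists>f g. (f, C, A) \<in> D \<and> (g, C, B) \<in> D)
   \<and> (\<forall>f g A B C. (f, B, A) \<in> D \<and> (g, C, A) \<in> D \<longrightarrow>
        (\<exists>E' f' g'. (f', E', B) \<in> D \<and> (g', E', C) \<in> D \<and>
            (\<forall>x\<in>gV E'. f (f' x) = g (g' x))))"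

definition split_edge :: "fgraph \<Rightarrow> nat \<Rightarrow> nat \<Rightarrow> nat \<Rightarrow> fgraph" where
  "split_edge G a b c = (gV G \<union> {c},
      (gE G - {(a,b),(b,a)}) \<union> {(a,c),(c,a),(c,b),(b,c),(c,c)})"

definition collapse :: "nat \<Rightarrow> nat \<Rightarrow> nat \<Rightarrow> nat" where
  "collapse c a = (\<lambda>x. if x = c then a else x)"

definition allows_splitting_edges :: "fgraph set \<Rightarrow> ((nat \<Rightarrow> nat) \<times> fgraph \<times> fgraph) set \<Rightarrow> bool" where
  "allows_splitting_edges K D \<longleftrightarrow>
     (\<forall>G\<in>K. \<forall>a b. (a,b) \<in> gE G \<and> a \<noteq> b \<longrightarrow>
        (\<exists>c. c \<notin> gV G \<and> split_edge G a b c \<in> K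
             \<and> (collapse c a, split_edge G a b c, G) \<in> D
             \<and> (collapse c b, split_edge G a b c, G) \<in> D))"

text \<open>bonding maps: step n : F (n+1) \<rightarrow> F n; bond step m d = f^{m+d}_m\<close>
fun bond :: "(nat \<Rightarrow> nat \<Rightarrow> nat) \<Rightarrow> nat \<Rightarrow> nat \<Rightarrow> nat \<Rightarrow> nat" where
  "bond step m 0 = id"
| "bond step m (Suc d) = bond step m d \<circ> step (m + d)"

definition fraisse_sequence ::
  "fgraph set \<Rightarrow> ((nat \<Rightarrow> nat) \<times> fgraph \<times> fgraph) set \<Rightarrow> (nat \<Rightarrow> fgraph) \<Rightarrow> (nat \<Rightarrow> nat \<Rightarrow> nat) \<Rightarrow> bool" where
  "fraisse_sequence K D F step \<longleftrightarrow>
     (\<forall>n. F n \<in> K \<and> (step n, F (Suc n), F n) \<in> D)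
   \<and> (\<forall>A\<in>K. \<exists>n f. (f, F n, A) \<in> D)
   \<and> (\<forall>m f A. (f, A, F m) \<in> D \<longrightarrow>
        (\<exists>n\<ge>m. \<exists>g. (g, F n, A) \<in> D \<and> (\<forall>x\<in>gV (F n). f (g x) = bond step m (n - m) x)))"

definition limV :: "(nat \<Rightarrow> fgraph) \<Rightarrow> (nat \<Rightarrow> nat \<Rightarrow> nat) \<Rightarrow> (nat \<Rightarrow> nat) set" where
  "limV F step = {x. \<forall>n. x n \<in> gV (F n) \<and> step n (x (Suc n)) = x n}"

definition limE :: "(nat \<Rightarrow> fgraph) \<Rightarrow> (nat \<Rightarrow> nat \<Rightarrow> nat) \<Rightarrow> ((nat \<Rightarrow> nat) \<times> (nat \<Rightarrow> nat)) set" where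
  "limE F step = {(x,y). x \<in> limV F step \<and> y \<in> limV F step \<and> (\<forall>n. (x n, y n) \<in> gE (F n))}"

definition limT :: "(nat \<Rightarrow> fgraph) \<Rightarrow> (nat \<Rightarrow> nat \<Rightarrow> nat) \<Rightarrow> (nat \<Rightarrow> nat) topology" where
  "limT F step = subtopology (product_topology (\<lambda>n. discrete_topology (gV (F n))) UNIV) (limV F step)"

definition top_graph :: "'a topology \<Rightarrow> ('a \<times> 'a) set \<Rightarrow> bool" where
  "top_graph T E \<longleftrightarrow> compact_space T \<and> Hausdorff_space T \<and> T dim_le 0 \<and> second_countable T
     \<and> E \<subseteq> topspace T \<times> topspace T \<and> closedin (prod_topology T T) E
     \<and> (\<forall>v\<in>topspace T. (v,v) \<in> E) \<and> (\<forall>a b. (a,b) \<in> E \<longrightarrow> (b,a) \<in> E)"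

definition tg_connected :: "'a topology \<Rightarrow> ('a \<times> 'a) set \<Rightarrow> 'a set \<Rightarrow> bool" where
  "tg_connected T E S \<longleftrightarrow> \<not> (\<exists>A B. closedin (subtopology T S) A \<and> closedin (subtopology T S) B
      \<and> A \<noteq> {} \<and> B \<noteq> {} \<and> A \<inter> B = {} \<and> A \<union> B = S \<and> (\<forall>a\<in>A. \<forall>b\<in>B. (a,b) \<notin> E))"

definition arc_endpoints :: "'a topology \<Rightarrow> ('a \<times> 'a) set \<Rightarrow> 'a set" where
  "arc_endpoints T E = {v \<in> topspace T. tg_connected T E (topspace T - {v})}"

definition is_arc :: "'a topology \<Rightarrow> ('a \<times> 'a) set \<Rightarrow> bool" where
  "is_arc T E \<longleftrightarrow> top_graph T E \<and> tg_connected T E (topspace T)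
     \<and> finite (arc_endpoints T E) \<and> card (arc_endpoints T E) \<le> 2"

definition tg_embedding :: "'a topology \<Rightarrow> ('a \<times> 'a) set \<Rightarrow> 'b topology \<Rightarrow> ('b \<times> 'b) set \<Rightarrow> ('a \<Rightarrow> 'b) \<Rightarrow> bool" where
  "tg_embedding TH EH TG EG f \<longleftrightarrow> inj_on f (topspace TH) \<and> embedding_map TH TG f
     \<and> (\<forall>a\<in>topspace TH. \<forall>b\<in>topspace TH. (a,b) \<in> EH \<longleftrightarrow> (f a, f b) \<in> EG)"

text \<open>endpoint of G; arcs H are taken with vertex type equal to that of G (every
  arc embedded in G is isomorphic to its image, so this loses no generality)\<close>
definition is_endpoint :: "'a topology \<Rightarrow> ('a \<times> 'a) set \<Rightarrow> 'a \<Rightarrow> bool" where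
  "is_endpoint T E x \<longleftrightarrow> x \<in> topspace T \<and>
     (\<forall>(TH :: 'a topology) EH f. is_arc TH EH \<and> tg_embedding TH EH T E f \<and> x \<in> f ` topspace TH
        \<longrightarrow> (\<exists>h\<in>arc_endpoints TH EH. f h = x))"

end

theory Submission
  imports Defs
begin
definition symE :: "('a \<times> 'a) set \<Rightarrow> bool" where
  "symE E \<longleftrightarrow> (\<forall>a b. (a,b) \<in> E \<longrightarrow> (b,a) \<in> E)"

lemma conn_sub:
  assumes "set_connected E C" "C \<subseteq> A \<union> B" "A \<inter> B = {}"
    "\<forall>a\<in>A. \<forall>b\<in>B. (a,b) \<notin> E" "\<forall>a\<in>A. \<forall>b\<in>B. (b,a) \<notin> E"
  shows "C \<subseteq> A \<or> C \<subseteq> B"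
proof (rule ccontr)
  assume "\<not> (C \<subseteq> A \<or> C \<subseteq> B)"
  then have 1: "C \<inter> A \<noteq> {}" "C \<inter> B \<noteq> {}" using assms(2) by blast+
  have 2: "C \<inter> A \<inter> (C \<inter> B) = {}" using assms(3) by blast
  have 3: "C \<inter> A \<union> C \<inter> B = C" using assms(2) by blast
  have 4: "\<forall>a\<in>C \<inter> A. \<forall>b\<in>C \<inter> B. (a,b) \<notin> E" using assms(4) by blast
  have "\<exists>A B. A \<noteq> {} \<and> B \<noteq> {} \<and> A \<inter> B = {} \<and> A \<union> B = C
       \<and> (\<forall>a\<in>A. \<forall>b\<in>B. (a,b) \<notin> E)" 
    by (rule exI[of _ "C \<inter> A"], rule exI[of _ "C \<inter> B"]) (use 1 2 3 4 in blast)
  then show False using assms(1) unfolding set_connected_def by blast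
qed

lemma conn_partI:
  assumes "\<And>A B. A \<noteq> {} \<Longrightarrow> B \<noteq> {} \<Longrightarrow> A \<inter> B = {} \<Longrightarrow> A \<union> B = S \<Longrightarrow>
     \<forall>a\<in>A. \<forall>b\<in>B. (a,b) \<notin> E \<Longrightarrow> \<forall>a\<in>A. \<forall>b\<in>B. (b,a) \<notin> E \<Longrightarrow> False"
    and sym: "symE E"
  shows "set_connected E S"
  unfolding set_connected_def
proof (rule notI, elim exE conjE)
  fix A B assume h: "A \<noteq> {}" "B \<noteq> {}" "A \<inter> B = {}" "A \<union> B = S" "\<forall>a\<in>A. \<forall>b\<in>B. (a,b) \<notin> E"
  have "\<forall>a\<in>A. \<forall>b\<in>B. (b,a) \<notin> E"
  proof (intro ballI notI)
    fix a b assume "a \<in> A" "b \<in> B" "(b,a) \<in> E"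
    then have "(a,b) \<in> E" using sym unfolding symE_def by blast
    then show False using h(5) \<open>a \<in> A\<close> \<open>b \<in> B\<close> by blast
  qed
  then show False using assms(1)[OF h] by blast
qed

lemma conn_single: "set_connected E {x}"
  unfolding set_connected_def
proof clarify
  fix A B assume h: "A \<noteq> {}" "B \<noteq> {}" "A \<inter> B = {}" "A \<union> B = {x}"
  then have "A \<subseteq> {x}" "B \<subseteq> {x}" by auto
  then have "A = {x}" "B = {x}" using h(1,2) by auto
  then show False using h(3) by auto
qed

lemma conn_empty: "set_connected E {}"
  unfolding set_connected_def by auto

lemma conn_union_family:
  assumes sym: "symE E" and y: "y \<in> W"
    and h: "\<And>u. u \<in> W \<Longrightarrow> \<exists>C\<subseteq>W. set_connected E C \<and> y \<in> C \<and> u \<in> C"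
  shows "set_connected E W"
proof (rule conn_partI[OF _ sym])
  fix A B assume AB: "A \<noteq> {}" "B \<noteq> {}" "A \<inter> B = {}" "A \<union> B = W"
    "\<forall>a\<in>A. \<forall>b\<in>B. (a,b) \<notin> E" "\<forall>a\<in>A. \<forall>b\<in>B. (b,a) \<notin> E"
  have key: "\<And>u. u \<in> W \<Longrightarrow> (u \<in> A \<longleftrightarrow> y \<in> A)"
  proof -
    fix u assume "u \<in> W"
    then obtain C where C: "C \<subseteq> W" "set_connected E C" "y \<in> C" "u \<in> C" using h by blast
    have "C \<subseteq> A \<or> C \<subseteq> B" using conn_sub[OF C(2), of A B] C(1) AB by auto
    then show "u \<in> A \<longleftrightarrow> y \<in> A" using C AB by blast
  qed
  obtain a b where "a \<in> A" "b \<in> B" using AB by blast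
  then show False using key[of a] key[of b] AB by blast
qed

lemma conn_union:
  assumes sym: "symE E" and "set_connected E C1" "set_connected E C2" "x \<in> C1" "x \<in> C2"
  shows "set_connected E (C1 \<union> C2)"
proof (rule conn_partI[OF _ sym])
  fix A B assume AB: "A \<noteq> {}" "B \<noteq> {}" "A \<inter> B = {}" "A \<union> B = C1 \<union> C2"
    "\<forall>a\<in>A. \<forall>b\<in>B. (a,b) \<notin> E" "\<forall>a\<in>A. \<forall>b\<in>B. (b,a) \<notin> E"
  have 1: "C1 \<subseteq> A \<or> C1 \<subseteq> B" using conn_sub[OF assms(2), of A B] AB by auto
  have 2: "C2 \<subseteq> A \<or> C2 \<subseteq> B" using conn_sub[OF assms(3), of A B] AB by auto
  show False using 1 2 AB assms(4,5) by blast
qed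

lemma conn_union_edge:
  assumes sym: "symE E" and "set_connected E C1" "set_connected E C2" "x \<in> C1" "z \<in> C2" "(x,z) \<in> E"
  shows "set_connected E (C1 \<union> C2)"
proof (rule conn_partI[OF _ sym])
  fix A B assume AB: "A \<noteq> {}" "B \<noteq> {}" "A \<inter> B = {}" "A \<union> B = C1 \<union> C2"
    "\<forall>a\<in>A. \<forall>b\<in>B. (a,b) \<notin> E" "\<forall>a\<in>A. \<forall>b\<in>B. (b,a) \<notin> E"
  have 1: "C1 \<subseteq> A \<or> C1 \<subseteq> B" using conn_sub[OF assms(2), of A B] AB by auto
  have 2: "C2 \<subseteq> A \<or> C2 \<subseteq> B" using conn_sub[OF assms(3), of A B] AB by auto
  show False using 1 2 AB assms(4,5,6) by blast
qed

lemma conn_insert: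
  assumes sym: "symE E" and "set_connected E C" "c \<in> C" "(x,c) \<in> E"
  shows "set_connected E (insert x C)"
  using conn_union_edge[OF sym conn_single assms(2) singletonI assms(3) assms(4)] by simp

definition is_path :: "('a \<times> 'a) set \<Rightarrow> 'a list \<Rightarrow> bool" where
  "is_path E xs \<longleftrightarrow> xs \<noteq> [] \<and> (\<forall>i. Suc i < length xs \<longrightarrow> (xs ! i, xs ! Suc i) \<in> E)"

lemma path_conn:
  assumes sym: "symE E" and "is_path E xs"
  shows "set_connected E (set xs)"
  using assms(2)
proof (induction xs)
  case Nil then show ?case by (simp add: is_path_def)
next
  case (Cons x xs)
  show ?case
  proof (cases xs)
    case Nil then show ?thesis by (simp add: conn_single)
  next
    case (Cons y ys)
    have p: "is_path E xs" unfolding is_path_def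
    proof (intro conjI allI impI)
      show "xs \<noteq> []" using Cons by simp
      fix i assume "Suc i < length xs"
      then have "Suc (Suc i) < length (x # xs)" by simp
      then have "((x#xs) ! Suc i, (x#xs) ! Suc (Suc i)) \<in> E" using Cons.prems unfolding is_path_def by blast
      then show "(xs ! i, xs ! Suc i) \<in> E" by simp
    qed
    have "(x, y) \<in> E" using Cons.prems Cons unfolding is_path_def by (auto dest: spec[of _ 0])
    then show ?thesis using conn_insert[OF sym Cons.IH[OF p], of y x] Cons by simp
  qed
qed

lemma path_exists:
  assumes "set_connected E K" "p \<in> K" "q \<in> K"
  shows "\<exists>xs. is_path E xs \<and> hd xs = p \<and> last xs = q \<and> distinct xs \<and> set xs \<subseteq> K"
proof (rule ccontr)
  assume nq: "\<not> ?thesis"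
  define R where "R = {x \<in> K. \<exists>xs. is_path E xs \<and> hd xs = p \<and> last xs = x \<and> distinct xs \<and> set xs \<subseteq> K}"
  have pR: "p \<in> R" unfolding R_def using assms by (auto intro!: exI[of _ "[p]"] simp: is_path_def)
  have qR: "q \<in> K - R" using nq assms unfolding R_def by auto
  have noE: "\<forall>a\<in>R. \<forall>b\<in>K - R. (a,b) \<notin> E"
  proof (intro ballI notI)
    fix r s assume r: "r \<in> R" and s: "s \<in> K - R" and rs: "(r,s) \<in> E"
    from r obtain xs where xs: "is_path E xs" "hd xs = p" "last xs = r" "distinct xs" "set xs \<subseteq> K"
      unfolding R_def by blast
    show False
    proof (cases "s \<in> set xs")
      case True
      then obtain j where j: "j < length xs" "xs ! j = s" by (auto simp: in_set_conv_nth)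
      let ?ys = "take (Suc j) xs"
      have "is_path E ?ys" using xs(1) j unfolding is_path_def by auto
      moreover have "hd ?ys = p" using xs j by (cases xs) auto
      moreover have "last ?ys = s" using j by (simp add: take_Suc_conv_app_nth)
      moreover have "distinct ?ys" using xs by simp
      moreover have "set ?ys \<subseteq> K" using xs(5) by (meson order_trans set_take_subset)
      ultimately have "s \<in> R" unfolding R_def using s by blast
      then show False using s by blast
    next
      case False
      let ?ys = "xs @ [s]"
      have "is_path E ?ys" using xs(1,3) rs unfolding is_path_def
        apply (auto simp: nth_append)
        by (metis One_nat_def Suc_lessI diff_Suc_1 last_conv_nth length_greater_0_conv less_antisym)
      moreover have "hd ?ys = p" using xs by (simp add: is_path_def)
      moreover have "last ?ys = s" by simp
      moreover have "distinct ?ys" using xs False by simp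
      moreover have "set ?ys \<subseteq> K" using xs(5) s by auto
      ultimately have "s \<in> R" unfolding R_def using s by blast
      then show False using s by blast
    qed
  qed
  show False using assms(1) unfolding set_connected_def
    apply (elim notE)
    apply (rule exI[of _ R], rule exI[of _ "K - R"])
    using pR qR noE by (auto simp: R_def)
qed

lemma fgraph_sym: "is_fgraph G \<Longrightarrow> symE (gE G)"
  unfolding is_fgraph_def symE_def by blast

lemma cycle_lemma:
  assumes "set_connected (gE G) K" "K \<subseteq> gV G" "y \<in> gV G" "y \<notin> K" "p \<in> K" "q \<in> K" "p \<noteq> q"
    "(y,p) \<in> gE G" "(q,y) \<in> gE G"
  shows "has_cycle G"
proof -
  obtain xs where xs: "is_path (gE G) xs" "hd xs = p" "last xs = q" "distinct xs" "set xs \<subseteq> K"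
    using path_exists[OF assms(1) assms(5) assms(6)] by blast
  have ne: "xs \<noteq> []" using xs(1) by (simp add: is_path_def)
  have l2: "length xs \<ge> 2"
  proof (rule ccontr)
    assume "\<not> length xs \<ge> 2"
    then obtain z where "xs = [z]" using ne by (cases xs) (auto simp: Suc_le_eq)
    then show False using xs assms(7) by simp
  qed
  show ?thesis unfolding has_cycle_def
  proof (rule exI[of _ "y # xs"], intro conjI allI impI)
    show "3 \<le> length (y # xs)" using l2 by simp
    show "distinct (y # xs)" using xs assms(4) by auto
    show "set (y # xs) \<subseteq> gV G" using xs(5) assms(2,3) by auto
    show "(last (y # xs), hd (y # xs)) \<in> gE G" using xs(3) ne assms(9) by simp
    fix i assume i: "Suc i < length (y # xs)"
    show "((y # xs) ! i, (y # xs) ! Suc i) \<in> gE G"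
    proof (cases i)
      case 0 then show ?thesis using xs(2) ne assms(8) by (simp add: hd_conv_nth)
    next
      case (Suc j) then show ?thesis using xs(1) i unfolding is_path_def by simp
    qed
  qed
qed

lemma nbr_piece:
  assumes sym: "symE E" and "set_connected E X" "y \<in> X" "z \<in> X" "z \<noteq> y"
  shows "\<exists>C\<subseteq>X - {y}. set_connected E C \<and> z \<in> C \<and> (\<exists>p\<in>C. (y,p) \<in> E)"
proof -
  obtain xs where xs: "is_path E xs" "hd xs = y" "last xs = z" "distinct xs" "set xs \<subseteq> X"
    using path_exists[OF assms(2) assms(3) assms(4)] by blast
  have ne: "xs \<noteq> []" using xs(1) by (simp add: is_path_def)
  obtain ys where ys: "xs = y # ys" using ne xs(2) by (cases xs) auto
  have ysne: "ys \<noteq> []" using ys xs(3) assms(5) by auto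
  have p: "is_path E ys" unfolding is_path_def
  proof (intro conjI allI impI)
    show "ys \<noteq> []" by fact
    fix i assume "Suc i < length ys"
    then have "Suc (Suc i) < length xs" using ys by simp
    then have "(xs ! Suc i, xs ! Suc (Suc i)) \<in> E" using xs(1) unfolding is_path_def by blast
    then show "(ys ! i, ys ! Suc i) \<in> E" using ys by simp
  qed
  have e: "(y, hd ys) \<in> E"
  proof -
    have "(xs ! 0, xs ! Suc 0) \<in> E" using xs(1) ys ysne unfolding is_path_def by auto
    then show ?thesis using ys ysne by (simp add: hd_conv_nth)
  qed
  show ?thesis
  proof (rule exI[of _ "set ys"], intro conjI)
    show "set ys \<subseteq> X - {y}" using xs(4,5) ys by auto
    show "set_connected E (set ys)" using path_conn[OF sym p] .
    show "z \<in> set ys" using xs(3) ys ysne by (metis last_in_set last_ConsR)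
    show "\<exists>p\<in>set ys. (y, p) \<in> E" using e ysne by auto
  qed
qed

definition Btw :: "fgraph \<Rightarrow> nat \<Rightarrow> nat \<Rightarrow> nat set" where
  "Btw G a b = {z \<in> gV G. \<forall>C. C \<subseteq> gV G \<and> set_connected (gE G) C \<and> a \<in> C \<and> b \<in> C \<longrightarrow> z \<in> C}"

lemma Btw_ends: "a \<in> gV G \<Longrightarrow> b \<in> gV G \<Longrightarrow> a \<in> Btw G a b \<and> b \<in> Btw G a b"
  unfolding Btw_def by auto

lemma Btw_sub: "Btw G a b \<subseteq> gV G" unfolding Btw_def by auto

lemma Btw_le: "C \<subseteq> gV G \<Longrightarrow> set_connected (gE G) C \<Longrightarrow> a \<in> C \<Longrightarrow> b \<in> C \<Longrightarrow> Btw G a b \<subseteq> C"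
  unfolding Btw_def by auto

lemma Btw_conn:
  assumes T: "is_ftree G" and a: "a \<in> gV G" and b: "b \<in> gV G"
  shows "set_connected (gE G) (Btw G a b)"
proof -
  have fg: "is_fgraph G" and cV: "set_connected (gE G) (gV G)" and nc: "\<not> has_cycle G"
    using T unfolding is_ftree_def by auto
  have sym: "symE (gE G)" using fgraph_sym[OF fg] .
  have fin: "finite (gV G)" using fg unfolding is_fgraph_def by auto
  define P where "P C \<longleftrightarrow> C \<subseteq> gV G \<and> set_connected (gE G) C \<and> a \<in> C \<and> b \<in> C" for C
  have "P (gV G)" unfolding P_def using cV a b by auto
  obtain M where M: "P M" and Mmin: "\<And>C. P C \<Longrightarrow> card M \<le> card C"
    using ex_has_least_nat[of P "gV G" card] \<open>P (gV G)\<close> by blast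
  have Msub: "M \<subseteq> gV G" and Mc: "set_connected (gE G) M" and aM: "a \<in> M" and bM: "b \<in> M"
    using M unfolding P_def by auto
  have finM: "finite M" using Msub fin finite_subset by blast
  have "M \<subseteq> Btw G a b"
  proof
    fix y assume yM: "y \<in> M"
    show "y \<in> Btw G a b" unfolding Btw_def
    proof (intro CollectI conjI allI impI)
      show "y \<in> gV G" using yM Msub by auto
      fix C assume C: "C \<subseteq> gV G \<and> set_connected (gE G) C \<and> a \<in> C \<and> b \<in> C"
      show "y \<in> C"
      proof (rule ccontr)
        assume yC: "y \<notin> C"
        then have ya: "y \<noteq> a" and yb: "y \<noteq> b" using C by auto
        obtain Ca pa where Ca: "Ca \<subseteq> M - {y}" "set_connected (gE G) Ca" "a \<in> Ca" "pa \<in> Ca" "(y,pa) \<in> gE G"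
          using nbr_piece[OF sym Mc yM aM] ya by blast
        obtain Cb pb where Cb: "Cb \<subseteq> M - {y}" "set_connected (gE G) Cb" "b \<in> Cb" "pb \<in> Cb" "(y,pb) \<in> gE G"
          using nbr_piece[OF sym Mc yM bM] yb by blast
        have "pa \<noteq> pb"
        proof
          assume "pa = pb"
          then have U: "set_connected (gE G) (Ca \<union> Cb)" using conn_union[OF sym Ca(2) Cb(2) Ca(4)] Cb(4) by simp
          have "P (Ca \<union> Cb)" unfolding P_def using U Ca Cb Msub by auto
          then have "card M \<le> card (Ca \<union> Cb)" using Mmin by blast
          moreover have "card (Ca \<union> Cb) < card M"
            using Ca(1) Cb(1) yM finM by (intro psubset_card_mono) auto
          ultimately show False by simp
        qed
        have K1: "set_connected (gE G) (Ca \<union> C)" using conn_union[OF sym Ca(2) _ Ca(3)] C by blast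
        have K: "set_connected (gE G) (Ca \<union> C \<union> Cb)" using conn_union[OF sym K1 Cb(2), of b] C Cb by blast
        show False
          using cycle_lemma[OF K _ _ _ _ _ \<open>pa \<noteq> pb\<close> Ca(5)] Ca Cb C yC Msub yM sym nc
          unfolding symE_def by blast
      qed
    qed
  qed
  moreover have "Btw G a b \<subseteq> M" using Btw_le[OF Msub Mc aM bM] .
  ultimately show ?thesis using Mc by simp
qed

lemma epi_edge:
  assumes "is_epi f B A" "x \<in> gV B" "y \<in> gV B" "(x,y) \<in> gE B"
  shows "(f x, f y) \<in> gE A"
proof -
  have fx: "f x \<in> gV A" and fy: "f y \<in> gV A" using assms(1-3) unfolding is_epi_def by auto
  have "\<forall>a1\<in>gV A. \<forall>a2\<in>gV A. (a1,a2) \<in> gE A \<longleftrightarrow>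
        (\<exists>b1\<in>gV B. \<exists>b2\<in>gV B. f b1 = a1 \<and> f b2 = a2 \<and> (b1,b2) \<in> gE B)"
    using assms(1) unfolding is_epi_def by (rule conjunct2)
  then have iff: "(f x, f y) \<in> gE A \<longleftrightarrow>
        (\<exists>b1\<in>gV B. \<exists>b2\<in>gV B. f b1 = f x \<and> f b2 = f y \<and> (b1,b2) \<in> gE B)"
    using fx fy by blast
  show ?thesis using assms(2-4) by (intro iffD2[OF iff]) blast
qed

lemma epi_lift:
  assumes "is_epi f B A" "a \<in> gV A" "b \<in> gV A" "(a,b) \<in> gE A"
  shows "\<exists>b1 b2. b1 \<in> gV B \<and> b2 \<in> gV B \<and> f b1 = a \<and> f b2 = b \<and> (b1,b2) \<in> gE B"
proof -
  have "\<forall>a1\<in>gV A. \<forall>a2\<in>gV A. (a1,a2) \<in> gE A \<longleftrightarrow>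
        (\<exists>b1\<in>gV B. \<exists>b2\<in>gV B. f b1 = a1 \<and> f b2 = a2 \<and> (b1,b2) \<in> gE B)"
    using assms(1) unfolding is_epi_def by (rule conjunct2)
  then have iff: "(a, b) \<in> gE A \<longleftrightarrow>
        (\<exists>b1\<in>gV B. \<exists>b2\<in>gV B. f b1 = a \<and> f b2 = b \<and> (b1,b2) \<in> gE B)"
    using assms(2,3) by blast
  show ?thesis using iffD1[OF iff assms(4)] by blast
qed

lemma epi_onto: "is_epi f B A \<Longrightarrow> c \<in> gV A \<Longrightarrow> \<exists>b\<in>gV B. f b = c"
  unfolding is_epi_def by (metis imageE)

lemma epi_into: "is_epi f B A \<Longrightarrow> b \<in> gV B \<Longrightarrow> f b \<in> gV A"
  unfolding is_epi_def by auto

lemma img_conn: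
  assumes epi: "is_epi f B A" and fA: "is_fgraph A" and C: "C \<subseteq> gV B" "set_connected (gE B) C"
  shows "set_connected (gE A) (f ` C)"
proof (rule conn_partI[OF _ fgraph_sym[OF fA]])
  fix X Y assume h: "X \<noteq> {}" "Y \<noteq> {}" "X \<inter> Y = {}" "X \<union> Y = f ` C"
    "\<forall>a\<in>X. \<forall>b\<in>Y. (a,b) \<notin> gE A" "\<forall>a\<in>X. \<forall>b\<in>Y. (b,a) \<notin> gE A"
  let ?X = "{x \<in> C. f x \<in> X}" and ?Y = "{x \<in> C. f x \<in> Y}"
  have "C \<subseteq> ?X \<union> ?Y"
  proof
    fix x assume "x \<in> C"
    then have "f x \<in> X \<union> Y" using h(4) by simp
    then show "x \<in> ?X \<union> ?Y" using \<open>x \<in> C\<close> by simp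
  qed
  moreover have "?X \<inter> ?Y = {}" using h(3) by auto
  moreover have "\<forall>a\<in>?X. \<forall>b\<in>?Y. (a,b) \<notin> gE B"
  proof (intro ballI notI)
    fix a b assume "a \<in> ?X" "b \<in> ?Y" "(a,b) \<in> gE B"
    then have "(f a, f b) \<in> gE A" using epi_edge[OF epi] C(1) by blast
    then show False using h(5) \<open>a \<in> ?X\<close> \<open>b \<in> ?Y\<close> by blast
  qed
  moreover have "\<forall>a\<in>?X. \<forall>b\<in>?Y. (b,a) \<notin> gE B"
  proof (intro ballI notI)
    fix a b assume "a \<in> ?X" "b \<in> ?Y" "(b,a) \<in> gE B"
    then have "(f b, f a) \<in> gE A" using epi_edge[OF epi] C(1) by blast
    then show False using h(6) \<open>a \<in> ?X\<close> \<open>b \<in> ?Y\<close> by blast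
  qed
  ultimately have "C \<subseteq> ?X \<or> C \<subseteq> ?Y" using conn_sub[OF C(2), of ?X ?Y] by blast
  then have "f ` C \<subseteq> X \<or> f ` C \<subseteq> Y" by auto
  then have "Y \<subseteq> X \<or> X \<subseteq> Y" using h(4) by auto
  then show False using h(1-3) by auto
qed

lemma fibre_nonempty: "is_epi f B A \<Longrightarrow> c \<in> gV A \<Longrightarrow> fibre f B c \<noteq> {}"
proof -
  assume "is_epi f B A" "c \<in> gV A"
  then obtain b where "b \<in> gV B" "f b = c" using epi_onto by blast
  then show ?thesis unfolding fibre_def by blast
qed

lemma pre_conn:
  assumes epi: "is_epi f B A" and mon: "monotone_epi f B A" and fB: "is_fgraph B"
    and C: "C \<subseteq> gV A" "set_connected (gE A) C"
  shows "set_connected (gE B) {x \<in> gV B. f x \<in> C}"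
proof (rule conn_partI[OF _ fgraph_sym[OF fB]])
  let ?P = "{x \<in> gV B. f x \<in> C}"
  fix X Y assume h: "X \<noteq> {}" "Y \<noteq> {}" "X \<inter> Y = {}" "X \<union> Y = ?P"
    "\<forall>a\<in>X. \<forall>b\<in>Y. (a,b) \<notin> gE B" "\<forall>a\<in>X. \<forall>b\<in>Y. (b,a) \<notin> gE B"
  have fib: "fibre f B c \<subseteq> X \<or> fibre f B c \<subseteq> Y" if "c \<in> C" for c
  proof -
    have c1: "set_connected (gE B) (fibre f B c)" using mon that C(1) unfolding monotone_epi_def by blast
    have c2: "fibre f B c \<subseteq> X \<union> Y" using h(4) that unfolding fibre_def by auto
    show ?thesis using conn_sub[OF c1 c2 h(3) h(5) h(6)] .
  qed
  have sideX: "b \<in> X" if "b \<in> gV B" "f b = f x" "x \<in> X" for b x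
  proof -
    have xc: "f x \<in> C" "x \<in> fibre f B (f x)" "b \<in> fibre f B (f x)" using that h(4) unfolding fibre_def by auto
    have "\<not> fibre f B (f x) \<subseteq> Y" using xc(2) that(3) h(3) by blast
    then have "fibre f B (f x) \<subseteq> X" using fib[OF xc(1)] by blast
    then show ?thesis using xc(3) by blast
  qed
  have sideY: "b \<in> Y" if "b \<in> gV B" "f b = f x" "x \<in> Y" for b x
  proof -
    have xc: "f x \<in> C" "x \<in> fibre f B (f x)" "b \<in> fibre f B (f x)" using that h(4) unfolding fibre_def by auto
    have "\<not> fibre f B (f x) \<subseteq> X" using xc(2) that(3) h(3) by blast
    then have "fibre f B (f x) \<subseteq> Y" using fib[OF xc(1)] by blast
    then show ?thesis using xc(3) by blast
  qed
  have XP: "X \<subseteq> gV B" "Y \<subseteq> gV B" using h(4) by blast+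
  have 1: "f ` X \<noteq> {}" "f ` Y \<noteq> {}" using h(1,2) by auto
  have 2: "f ` X \<inter> f ` Y = {}"
  proof (rule ccontr)
    assume "f ` X \<inter> f ` Y \<noteq> {}"
    then obtain c where c: "c \<in> f ` X" "c \<in> f ` Y" by blast
    obtain x where x: "x \<in> X" "f x = c" using c(1) by blast
    obtain y where y: "y \<in> Y" "f y = c" using c(2) by blast
    have yV: "y \<in> gV B" using XP(2) y(1) by blast
    have "y \<in> X" using sideX[OF yV _ x(1)] x(2) y(2) by simp
    then show False using y(1) h(3) by blast
  qed
  have 3: "f ` X \<union> f ` Y = C"
  proof
    show "f ` X \<union> f ` Y \<subseteq> C" using h(4) by auto
    show "C \<subseteq> f ` X \<union> f ` Y"
    proof
      fix c assume "c \<in> C"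
      then obtain b where "b \<in> gV B" "f b = c" using epi_onto[OF epi] C(1) by blast
      then have "b \<in> X \<union> Y" using h(4) \<open>c \<in> C\<close> by auto
      then show "c \<in> f ` X \<union> f ` Y" using \<open>f b = c\<close> by blast
    qed
  qed
  have 4: "\<forall>a\<in>f ` X. \<forall>b\<in>f ` Y. (a,b) \<notin> gE A"
  proof (intro ballI notI)
    fix a b assume ab: "a \<in> f ` X" "b \<in> f ` Y" "(a,b) \<in> gE A"
    have "a \<in> gV A" "b \<in> gV A" using ab(1,2) XP epi_into[OF epi] by auto
    then obtain b1 b2 where bb: "b1 \<in> gV B" "b2 \<in> gV B" "f b1 = a" "f b2 = b" "(b1,b2) \<in> gE B"
      using epi_lift[OF epi _ _ ab(3)] by blast
    have "b1 \<in> X" using sideX[OF bb(1)] ab(1) bb(3) by blast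
    moreover have "b2 \<in> Y" using sideY[OF bb(2)] ab(2) bb(4) by blast
    ultimately show False using h(5) bb(5) by blast
  qed
  have "\<exists>X Y. X \<noteq> {} \<and> Y \<noteq> {} \<and> X \<inter> Y = {} \<and> X \<union> Y = C \<and> (\<forall>a\<in>X. \<forall>b\<in>Y. (a,b) \<notin> gE A)"
    by (rule exI[of _ "f ` X"], rule exI[of _ "f ` Y"]) (intro conjI 1 2 3 4)
  then show False using C(2) unfolding set_connected_def by blast
qed

lemma Btw_mono:
  assumes epi: "is_epi f B A" and mon: "monotone_epi f B A" and fB: "is_fgraph B"
    and ab: "a \<in> gV B" "b \<in> gV B" and z: "z \<in> Btw B a b"
  shows "f z \<in> Btw A (f a) (f b)"
  unfolding Btw_def
proof (intro CollectI conjI allI impI)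
  show "f z \<in> gV A" using z Btw_sub epi_into[OF epi] by blast
  fix C assume C: "C \<subseteq> gV A \<and> set_connected (gE A) C \<and> f a \<in> C \<and> f b \<in> C"
  have c: "set_connected (gE B) {x \<in> gV B. f x \<in> C}" using pre_conn[OF epi mon fB] C by blast
  have "Btw B a b \<subseteq> {x \<in> gV B. f x \<in> C}"
    by (rule Btw_le[OF _ c]) (use ab C in auto)
  then have "z \<in> {x \<in> gV B. f x \<in> C}" using z by blast
  then show "f z \<in> C" by simp
qed

lemma Btw_img:
  assumes epi: "is_epi f B A" and TA: "is_ftree A" and TB: "is_ftree B"
    and ab: "a \<in> gV B" "b \<in> gV B"
  shows "Btw A (f a) (f b) \<subseteq> f ` Btw B a b"
proof (rule Btw_le)
  have fA: "is_fgraph A" using TA unfolding is_ftree_def by auto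
  show "f ` Btw B a b \<subseteq> gV A" using Btw_sub epi_into[OF epi] by blast
  show "set_connected (gE A) (f ` Btw B a b)" using img_conn[OF epi fA Btw_sub Btw_conn[OF TB ab]] .
  show "f a \<in> f ` Btw B a b" "f b \<in> f ` Btw B a b" using Btw_ends[OF ab] by auto
qed

lemma side_lemma:
  assumes fG: "is_fgraph G" and cG: "set_connected (gE G) (gV G)" and y: "y \<in> gV G"
    and z: "z \<in> Btw G a b" "z \<noteq> y" and abV: "a \<in> gV G" "b \<in> gV G"
  shows "(\<exists>C\<subseteq>gV G - {y}. set_connected (gE G) C \<and> a \<in> C \<and> z \<in> C)
       \<or> (\<exists>C\<subseteq>gV G - {y}. set_connected (gE G) C \<and> b \<in> C \<and> z \<in> C)"
proof (rule ccontr)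
  assume na: "\<not> ?thesis"
  have sym: "symE (gE G)" using fgraph_sym[OF fG] .
  have zV: "z \<in> gV G" using z Btw_sub by blast
  define Z where "Z = {u \<in> gV G - {y}. \<exists>C\<subseteq>gV G - {y}. set_connected (gE G) C \<and> z \<in> C \<and> u \<in> C}"
  have aZ: "a \<notin> Z" and bZ: "b \<notin> Z" using na unfolding Z_def by blast+
  have zZ: "z \<in> Z" unfolding Z_def using zV z(2) conn_single[of "gE G" z] by auto
  define W where "W = gV G - Z"
  have yW: "y \<in> W" unfolding W_def Z_def using y by auto
  have Wc: "set_connected (gE G) W"
  proof (rule conn_union_family[OF sym yW])
    fix u assume uW: "u \<in> W"
    show "\<exists>C\<subseteq>W. set_connected (gE G) C \<and> y \<in> C \<and> u \<in> C"
    proof (cases "u = y")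
      case True then show ?thesis using yW conn_single[of "gE G" y] by auto
    next
      case False
      have uV: "u \<in> gV G" using uW W_def by auto
      obtain C p where C: "C \<subseteq> gV G - {y}" "set_connected (gE G) C" "u \<in> C" "p \<in> C" "(y,p) \<in> gE G"
        using nbr_piece[OF sym cG y uV False] by blast
      have CZ: "C \<inter> Z = {}"
      proof (rule ccontr)
        assume "C \<inter> Z \<noteq> {}"
        then obtain w C' where w: "w \<in> C" "C' \<subseteq> gV G - {y}" "set_connected (gE G) C'" "z \<in> C'" "w \<in> C'"
          unfolding Z_def by blast
        have "set_connected (gE G) (C \<union> C')" using conn_union[OF sym C(2) w(3) w(1) w(5)] .
        moreover have "C \<union> C' \<subseteq> gV G - {y}" using C(1) w(2) by blast
        moreover have "z \<in> C \<union> C'" "u \<in> C \<union> C'" using w(4) C(3) by auto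
        moreover have "u \<in> gV G - {y}" using uV False by blast
        ultimately have "u \<in> Z" unfolding Z_def by blast
        then show False using uW W_def by blast
      qed
      have "insert y C \<subseteq> W" using C(1) CZ yW W_def by auto
      moreover have "set_connected (gE G) (insert y C)"
        using conn_insert[OF sym C(2) C(4)] C(5) .
      ultimately show ?thesis using C(3) by blast
    qed
  qed
  have "W \<subseteq> gV G" unfolding W_def by auto
  moreover have "a \<in> W" "b \<in> W"
  proof -
    note abV
    then show "a \<in> W" "b \<in> W" using aZ bZ W_def by auto
  qed
  ultimately have "Btw G a b \<subseteq> W" using Wc Btw_le[of W G a b] by blast
  then have "z \<in> W" using z(1) by blast
  then show False using zZ W_def by blast
qed

lemma epi_img: "is_epi f B A \<Longrightarrow> f ` gV B = gV A" by (simp add: is_epi_def)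

locale LS =
  fixes K :: "fgraph set" and D :: "((nat \<Rightarrow> nat) \<times> fgraph \<times> fgraph) set"
    and F :: "nat \<Rightarrow> fgraph" and step :: "nat \<Rightarrow> nat \<Rightarrow> nat"
  assumes fam: "proj_fraisse_family K D"
    and trees: "\<forall>A\<in>K. is_ftree A"
    and monD: "\<forall>(f,B,A)\<in>D. monotone_epi f B A \<and> weakly_coherent f B A"
    and fs: "fraisse_sequence K D F step"
begin

lemma D_props:
  assumes "(f,B,A) \<in> D"
  shows "is_epi f B A" "monotone_epi f B A" "B \<in> K" "A \<in> K" "is_ftree B" "is_ftree A"
    "is_fgraph B" "is_fgraph A"
proof -
  have 1: "\<forall>(f,B,A)\<in>D. B \<in> K \<and> A \<in> K \<and> is_epi f B A"
    using fam unfolding proj_fraisse_family_def by (elim conjE) assumption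
  show "is_epi f B A" "B \<in> K" "A \<in> K" using 1 assms by auto
  show "monotone_epi f B A" using monD assms by auto
  then show "is_ftree B" "is_ftree A" using trees \<open>B \<in> K\<close> \<open>A \<in> K\<close> by auto
  then show "is_fgraph B" "is_fgraph A" unfolding is_ftree_def by auto
qed

lemma D_comp: "(g, C, B) \<in> D \<Longrightarrow> (f, B, A) \<in> D \<Longrightarrow> (f \<circ> g, C, A) \<in> D"
proof -
  have h: "\<forall>f g A B C. (g, C, B) \<in> D \<and> (f, B, A) \<in> D \<longrightarrow> (f \<circ> g, C, A) \<in> D"
    using fam unfolding proj_fraisse_family_def by (elim conjE) assumption
  then show "(g, C, B) \<in> D \<Longrightarrow> (f, B, A) \<in> D \<Longrightarrow> (f \<circ> g, C, A) \<in> D" by blast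
qed

lemma D_id: "A \<in> K \<Longrightarrow> (id, A, A) \<in> D"
proof -
  have h: "\<forall>A\<in>K. (id, A, A) \<in> D"
    using fam unfolding proj_fraisse_family_def by (elim conjE) assumption
  then show "A \<in> K \<Longrightarrow> (id, A, A) \<in> D" by blast
qed

lemma FK: "F n \<in> K" and stepD: "(step n, F (Suc n), F n) \<in> D"
  using fs unfolding fraisse_sequence_def by auto

lemma Ftree: "is_ftree (F n)" using trees FK by blast
lemma Ffg: "is_fgraph (F n)" using Ftree unfolding is_ftree_def by blast
lemma Fconn: "set_connected (gE (F n)) (gV (F n))" using Ftree unfolding is_ftree_def by blast
lemma Fsym: "symE (gE (F n))" using fgraph_sym[OF Ffg] .
lemma Frefl: "v \<in> gV (F n) \<Longrightarrow> (v, v) \<in> gE (F n)" using Ffg unfolding is_fgraph_def by blast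
lemma Fsym': "(a, b) \<in> gE (F n) \<Longrightarrow> (b, a) \<in> gE (F n)" using Ffg unfolding is_fgraph_def by blast

lemma bondD: "(bond step k d, F (k + d), F k) \<in> D"
proof (induction d)
  case 0
  have "bond step k 0 = id" by simp
  then show ?case using D_id[OF FK[of k]] by (metis add_0_right)
next
  case (Suc d)
  have "(bond step k d \<circ> step (k + d), F (Suc (k + d)), F k) \<in> D"
    using D_comp[OF stepD Suc.IH] .
  then show ?case by (simp only: bond.simps add_Suc_right)
qed

lemma bondD': "k \<le> k' \<Longrightarrow> (bond step k (k' - k), F k', F k) \<in> D"
  using bondD[of k "k' - k"] by simp

lemma bond_Suc': "bond step k (Suc d) = step k \<circ> bond step (Suc k) d"
proof (induction d)
  case 0 then show ?case by simp
next
  case (Suc d)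
  have "bond step k (Suc (Suc d)) = bond step k (Suc d) \<circ> step (k + Suc d)" by simp
  also have "\<dots> = (step k \<circ> bond step (Suc k) d) \<circ> step (Suc k + d)"
    by (subst Suc.IH[symmetric]) simp
  also have "\<dots> = step k \<circ> bond step (Suc k) (Suc d)" by (simp add: comp_assoc)
  finally show ?case .
qed

lemma limV_in: "x \<in> limV F step \<Longrightarrow> x n \<in> gV (F n)"
  unfolding limV_def by blast

lemma limV_step: "x \<in> limV F step \<Longrightarrow> step n (x (Suc n)) = x n"
  unfolding limV_def by blast

lemma limV_bond: "x \<in> limV F step \<Longrightarrow> bond step k d (x (k + d)) = x k"
proof (induction d)
  case 0 then show ?case by simp
next
  case (Suc d)
  have "bond step k (Suc d) (x (k + Suc d)) = bond step k d (step (k + d) (x (Suc (k + d))))" by simp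
  also have "\<dots> = bond step k d (x (k + d))" using limV_step[OF Suc.prems] by simp
  finally show ?case using Suc by simp
qed

lemma limV_bond': "x \<in> limV F step \<Longrightarrow> k \<le> k' \<Longrightarrow> bond step k (k' - k) (x k') = x k"
  using limV_bond[of x k "k' - k"] by simp

lemma limE_edge: "(x, y) \<in> limE F step \<Longrightarrow> (x n, y n) \<in> gE (F n)"
  unfolding limE_def by blast

lemma limE_mem: "(x, y) \<in> limE F step \<Longrightarrow> x \<in> limV F step \<and> y \<in> limV F step"
  unfolding limE_def by blast

lemma bond_map:
  assumes "\<And>n. step n ` Q (Suc n) \<subseteq> Q n"
  shows "bond step n d ` Q (n + d) \<subseteq> Q n"
proof (induction d)
  case 0 then show ?case by simp
next
  case (Suc d)
  have "bond step n (Suc d) ` Q (n + Suc d) = bond step n d ` (step (n + d) ` Q (Suc (n + d)))"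
    by (simp add: image_comp)
  also have "\<dots> \<subseteq> bond step n d ` Q (n + d)" using assms by (intro image_mono) blast
  finally show ?case using Suc by blast
qed

lemma thread_exists:
  assumes Qsub: "\<And>n. Q n \<subseteq> gV (F n)" and Qimg: "\<And>n. step n ` Q (Suc n) = Q n"
    and x: "x \<in> Q N"
  shows "\<exists>y\<in>limV F step. (\<forall>n. y n \<in> Q n) \<and> y N = x"
proof -
  define up where "up = rec_nat x (\<lambda>k u. SOME z. z \<in> Q (N + Suc k) \<and> step (N + k) z = u)"
  have up0: "up 0 = x" unfolding up_def by simp
  have upS: "up (Suc k) = (SOME z. z \<in> Q (N + Suc k) \<and> step (N + k) z = up k)" for k
    unfolding up_def by simp
  have upQ: "up k \<in> Q (N + k) \<and> (\<forall>j. k = Suc j \<longrightarrow> step (N + j) (up k) = up j)" for k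
  proof (induction k)
    case 0 then show ?case using up0 x by simp
  next
    case (Suc k)
    have "up k \<in> step (N + k) ` Q (Suc (N + k))" using Suc.IH Qimg by simp
    then have "\<exists>z. z \<in> Q (N + Suc k) \<and> step (N + k) z = up k" by auto
    then have "up (Suc k) \<in> Q (N + Suc k) \<and> step (N + k) (up (Suc k)) = up k"
      unfolding upS by (rule someI_ex)
    then show ?case by simp
  qed
  define y where "y n = (if N \<le> n then up (n - N) else bond step n (N - n) x)" for n
  have yQ: "y n \<in> Q n" for n
  proof (cases "N \<le> n")
    case True then show ?thesis using upQ[of "n - N"] unfolding y_def by simp
  next
    case False
    have "bond step n (N - n) ` Q (n + (N - n)) \<subseteq> Q n" using bond_map[of Q n "N - n"] Qimg by blast
    moreover have "n + (N - n) = N" using False by simp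
    ultimately show ?thesis using x False unfolding y_def by auto
  qed
  have ystep: "step n (y (Suc n)) = y n" for n
  proof (cases "N \<le> n")
    case True
    have "Suc n - N = Suc (n - N)" using True by simp
    then show ?thesis using True upQ[of "Suc (n - N)"] unfolding y_def by simp
  next
    case False
    show ?thesis
    proof (cases "Suc n = N")
      case True
      then have N: "N = Suc n" by simp
      show ?thesis unfolding y_def using up0 N by simp
    next
      case False2: False
      then have "N - n = Suc (N - Suc n)" using False by simp
      moreover have "y (Suc n) = bond step (Suc n) (N - Suc n) x" "y n = bond step n (N - n) x"
        unfolding y_def using False False2 by auto
      ultimately show ?thesis by (metis bond_Suc' comp_apply)
    qed
  qed
  have "\<forall>n. y n \<in> gV (F n) \<and> step n (y (Suc n)) = y n" using yQ Qsub ystep by blast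
  then have "y \<in> limV F step" by (simp add: limV_def)
  moreover have "y N = x" unfolding y_def using up0 by simp
  ultimately show ?thesis using yQ by blast
qed

lemma thread_full: "x \<in> gV (F N) \<Longrightarrow> \<exists>y\<in>limV F step. y N = x"
  using thread_exists[of "\<lambda>n. gV (F n)", OF order_refl epi_img[OF D_props(1)[OF stepD]]] by blast

end

context LS begin

abbreviation PT where "PT \<equiv> product_topology (\<lambda>n. discrete_topology (gV (F n))) UNIV"
abbreviation LT where "LT \<equiv> limT F step"
abbreviation LV where "LV \<equiv> limV F step"

lemma limV_sub_PT: "LV \<subseteq> topspace PT"
  using limV_in by (auto simp: PiE_def)

lemma topspace_LT: "topspace LT = LV"
  unfolding limT_def using limV_sub_PT by auto

lemma proj_cont_PT: "continuous_map PT (discrete_topology (gV (F n))) (\<lambda>x. x n)"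
  using continuous_map_product_projection[of n UNIV "\<lambda>n. discrete_topology (gV (F n))"] by simp

lemma proj_cont: "continuous_map LT (discrete_topology (gV (F n))) (\<lambda>x. x n)"
  unfolding limT_def by (rule continuous_map_from_subtopology[OF proj_cont_PT])

lemma cyl_eq: "{x \<in> LV. P (x n)} = {x \<in> topspace LT. (\<lambda>x. x n) x \<in> {a \<in> gV (F n). P a}}"
  using topspace_LT limV_in by auto

lemma cyl_open: "openin LT {x \<in> LV. P (x n)}"
  unfolding cyl_eq by (rule openin_continuous_map_preimage[OF proj_cont]) simp

lemma cyl_closed: "closedin LT {x \<in> LV. P (x n)}"
  unfolding cyl_eq by (rule closedin_continuous_map_preimage[OF proj_cont]) simp

lemma NB:
  assumes "openin LT V" "a \<in> V"
  shows "\<exists>N. {x \<in> LV. x N = a N} \<subseteq> V"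
proof -
  obtain T where T: "openin PT T" "V = T \<inter> LV"
    using assms(1) unfolding limT_def openin_subtopology by blast
  have aT: "a \<in> T" and aL: "a \<in> LV" using assms(2) T by auto
  obtain U where U: "finite {i \<in> UNIV. U i \<noteq> topspace (discrete_topology (gV (F i)))}"
    "a \<in> Pi\<^sub>E UNIV U" "Pi\<^sub>E UNIV U \<subseteq> T"
    using T(1) aT unfolding openin_product_topology_alt by blast
  define I where "I = {i. U i \<noteq> gV (F i)}"
  have finI: "finite I" using U(1) unfolding I_def by simp
  define N where "N = Max (insert 0 I)"
  have iN: "i \<in> I \<Longrightarrow> i \<le> N" for i unfolding N_def using finI by simp
  show ?thesis
  proof (rule exI[of _ N], rule subsetI)
    fix x assume x: "x \<in> {x \<in> LV. x N = a N}"
    have xi: "x i \<in> U i" for i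
    proof (cases "i \<in> I")
      case True
      then have "i \<le> N" by (rule iN)
      then have "x i = a i" using limV_bond'[of x i N] limV_bond'[of a i N] x aL by simp
      then show ?thesis using U(2) by auto
    next
      case False
      then show ?thesis unfolding I_def using limV_in x by auto
    qed
    then have "x \<in> Pi\<^sub>E UNIV U" by (simp add: PiE_def)
    then show "x \<in> V" using U(3) T(2) x by auto
  qed
qed

lemma LV_closed_PT: "closedin PT LV"
proof -
  define C where "C n = {x \<in> topspace PT. step n (x (Suc n)) = x n}" for n
  have LVeq: "LV = \<Inter> (range C)"
  proof
    show "LV \<subseteq> \<Inter> (range C)" unfolding C_def using limV_sub_PT limV_step by auto
    show "\<Inter> (range C) \<subseteq> LV"
    proof
      fix x assume "x \<in> \<Inter> (range C)"
      then have "\<forall>n. x n \<in> gV (F n) \<and> step n (x (Suc n)) = x n" unfolding C_def by auto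
      then show "x \<in> LV" by (simp add: limV_def)
    qed
  qed
  have "closedin PT (C n)" for n
  proof -
    have "openin PT (topspace PT - C n)"
    proof (subst openin_subopen, intro ballI)
      fix x assume x: "x \<in> topspace PT - C n"
      define W where "W = {y \<in> topspace PT. y (Suc n) \<in> {x (Suc n)}} \<inter> {y \<in> topspace PT. y n \<in> {x n}}"
      have "openin PT W" unfolding W_def
        by (intro openin_Int openin_continuous_map_preimage[OF proj_cont_PT]) (use x in auto)
      moreover have "x \<in> W" "W \<subseteq> topspace PT - C n" using x unfolding W_def C_def by auto
      ultimately show "\<exists>T. openin PT T \<and> x \<in> T \<and> T \<subseteq> topspace PT - C n" by blast
    qed
    moreover have "C n \<subseteq> topspace PT" unfolding C_def by auto
    ultimately show ?thesis by (simp add: closedin_def)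
  qed
  then show ?thesis unfolding LVeq by (intro closedin_Inter) auto
qed

lemma PT_compact: "compact_space PT"
proof -
  have "compact_space (discrete_topology (gV (F i)))" for i
    using Ffg[of i] unfolding is_fgraph_def compact_space_discrete_topology by blast
  then show ?thesis unfolding compact_space_product_topology by blast
qed

lemma LT_compact: "compact_space LT"
  unfolding limT_def by (rule compact_space_subtopology[OF closedin_compact_space[OF PT_compact LV_closed_PT]])

lemma LT_Hausdorff: "Hausdorff_space LT"
  unfolding limT_def
  by (rule Hausdorff_space_subtopology) (simp add: Hausdorff_space_product_topology)

lemma LT_dim0: "LT dim_le 0"
  unfolding dimension_le_0_neighbourhood_base_of_clopen neighbourhood_base_of
proof (intro allI impI)
  fix x W assume W: "openin LT W \<and> x \<in> W"
  have x: "x \<in> topspace LT" using W openin_subset by blast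
  obtain N where N: "{y \<in> LV. y N = x N} \<subseteq> W" using NB W by blast
  let ?U = "{y \<in> LV. y N = x N}"
  have "openin LT ?U" "closedin LT ?U" using cyl_open[of "\<lambda>t. t = x N" N] cyl_closed[of "\<lambda>t. t = x N" N] by auto
  moreover have "x \<in> ?U" using x topspace_LT by auto
  ultimately show "\<exists>U V. openin LT U \<and> (closedin LT V \<and> openin LT V) \<and> x \<in> U \<and> U \<subseteq> V \<and> V \<subseteq> W"
    using N by blast
qed

lemma LT_sc: "second_countable LT"
  unfolding second_countable_def
proof (intro exI conjI)
  let ?B = "(\<lambda>(N, t). {y \<in> LV. y N = t}) ` (UNIV :: (nat \<times> nat) set)"
  show "countable ?B" by simp
  show "\<forall>V\<in>?B. openin LT V" using cyl_open by auto
  show "\<forall>U x. openin LT U \<and> x \<in> U \<longrightarrow> (\<exists>V\<in>?B. x \<in> V \<and> V \<subseteq> U)"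
  proof (intro allI impI)
    fix U x assume h: "openin LT U \<and> x \<in> U"
    obtain N where N: "{y \<in> LV. y N = x N} \<subseteq> U" using NB h by blast
    have "x \<in> LV" using h openin_subset topspace_LT by blast
    then show "\<exists>V\<in>?B. x \<in> V \<and> V \<subseteq> U" using N by (intro bexI[of _ "{y \<in> LV. y N = x N}"]) auto
  qed
qed

end

locale ARC = LS +
  fixes u v :: "nat \<Rightarrow> nat"
  assumes uL: "u \<in> limV F step" and vL: "v \<in> limV F step"
begin

definition Q where "Q n = Btw (F n) (u n) (v n)"
definition S where "S = {y \<in> LV. \<forall>n. y n \<in> Q n}"
definition TH where "TH = subtopology LT S"
definition EH where "EH = limE F step \<inter> (S \<times> S)"

lemma uvV: "u n \<in> gV (F n)" "v n \<in> gV (F n)" using uL vL limV_in by auto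

lemma Qsub: "Q n \<subseteq> gV (F n)" unfolding Q_def by (rule Btw_sub)

lemma Qimg: "step n ` Q (Suc n) = Q n"
proof
  have e: "is_epi (step n) (F (Suc n)) (F n)" "monotone_epi (step n) (F (Suc n)) (F n)"
    using D_props[OF stepD] by auto
  have su: "step n (u (Suc n)) = u n" "step n (v (Suc n)) = v n" using uL vL limV_step by auto
  show "step n ` Q (Suc n) \<subseteq> Q n"
    using Btw_mono[OF e Ffg uvV[of "Suc n"]] su unfolding Q_def by auto
  show "Q n \<subseteq> step n ` Q (Suc n)"
    using Btw_img[OF e(1) Ftree Ftree uvV[of "Suc n"]] su unfolding Q_def by auto
qed

lemma SsubL: "S \<subseteq> LV" unfolding S_def by auto

lemma uS: "u \<in> S" and vS: "v \<in> S"
proof -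
  have "u n \<in> Q n \<and> v n \<in> Q n" for n unfolding Q_def using Btw_ends[OF uvV(1)[of n] uvV(2)[of n]] by blast
  then show "u \<in> S" "v \<in> S" unfolding S_def using uL vL by auto
qed

lemma topspace_TH: "topspace TH = S" unfolding TH_def using topspace_LT SsubL by auto

lemma cylQ_closed: "closedin LT {y \<in> LV. y n \<in> Q n}"
  using cyl_closed[of "\<lambda>t. t \<in> Q n" n] by simp

lemma S_closed: "closedin LT S"
proof -
  have "S = \<Inter> (range (\<lambda>n. {y \<in> LV. y n \<in> Q n}))" unfolding S_def by auto
  moreover have "closedin LT (\<Inter> (range (\<lambda>n. {y \<in> LV. y n \<in> Q n})))"
    by (rule closedin_Inter) (auto simp: cylQ_closed)
  ultimately show ?thesis by simp
qed

lemma projS: "(\<lambda>y. y N) ` S = Q N"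
proof
  show "(\<lambda>y. y N) ` S \<subseteq> Q N" unfolding S_def by auto
  show "Q N \<subseteq> (\<lambda>y. y N) ` S"
  proof
    fix x assume "x \<in> Q N"
    then obtain y where "y \<in> LV" "\<forall>n. y n \<in> Q n" "y N = x"
      using thread_exists[of Q, OF Qsub Qimg] by blast
    then have "y \<in> S" unfolding S_def by blast
    then show "x \<in> (\<lambda>y. y N) ` S" using \<open>y N = x\<close> by blast
  qed
qed

lemma TH_compact: "compact_space TH"
  unfolding TH_def by (rule compact_space_subtopology[OF closedin_compact_space[OF LT_compact S_closed]])

lemma cylS_open: "openin TH {x \<in> S. x n = t}"
proof -
  have "openin TH (S \<inter> {x \<in> LV. x n = t})"
    unfolding TH_def by (rule openin_subtopology_Int2[OF cyl_open])
  moreover have "S \<inter> {x \<in> LV. x n = t} = {x \<in> S. x n = t}" using SsubL by auto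
  ultimately show ?thesis by simp
qed

definition UU where "UU n = {(a, b). a \<in> S \<and> b \<in> S \<and> (a n, b n) \<notin> gE (F n)}"

lemma UU_open: "openin (prod_topology TH TH) (UU n)"
proof (subst openin_subopen, intro ballI)
  fix p assume p: "p \<in> UU n"
  obtain a b where ab: "p = (a, b)" by (cases p)
  let ?W = "{x \<in> S. x n = a n} \<times> {x \<in> S. x n = b n}"
  have "openin (prod_topology TH TH) ?W" using cylS_open by (simp add: openin_prod_Times_iff)
  moreover have "p \<in> ?W" "?W \<subseteq> UU n" using p ab unfolding UU_def by auto
  ultimately show "\<exists>T. openin (prod_topology TH TH) T \<and> p \<in> T \<and> T \<subseteq> UU n" by blast
qed

lemma notE_level:
  assumes "a \<in> S" "b \<in> S" "(a, b) \<notin> EH"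
  shows "\<exists>n. (a n, b n) \<notin> gE (F n)"
  using assms SsubL unfolding EH_def limE_def by auto

lemma edge_down:
  assumes "a \<in> LV" "b \<in> LV" "i \<le> N" "(a N, b N) \<in> gE (F N)"
  shows "(a i, b i) \<in> gE (F i)"
proof -
  have "is_epi (bond step i (N - i)) (F N) (F i)" using D_props(1)[OF bondD'[OF assms(3)]] .
  from epi_edge[OF this limV_in[OF assms(1)] limV_in[OF assms(2)] assms(4)]
  show ?thesis using limV_bond'[OF assms(1,3)] limV_bond'[OF assms(2,3)] by simp
qed

lemma EH_closed: "closedin (prod_topology TH TH) EH"
proof -
  have sub: "EH \<subseteq> topspace (prod_topology TH TH)" unfolding EH_def using topspace_TH by auto
  have "topspace (prod_topology TH TH) - EH = \<Union> (range UU)"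
  proof
    show "topspace (prod_topology TH TH) - EH \<subseteq> \<Union> (range UU)"
    proof
      fix p assume p: "p \<in> topspace (prod_topology TH TH) - EH"
      obtain a b where ab: "p = (a, b)" by (cases p)
      have "a \<in> S" "b \<in> S" "(a,b) \<notin> EH" using p ab topspace_TH by auto
      then obtain n where "(a n, b n) \<notin> gE (F n)" using notE_level by blast
      then show "p \<in> \<Union> (range UU)" using ab \<open>a \<in> S\<close> \<open>b \<in> S\<close> unfolding UU_def by auto
    qed
    show "\<Union> (range UU) \<subseteq> topspace (prod_topology TH TH) - EH"
      unfolding UU_def EH_def limE_def using topspace_TH by auto
  qed
  moreover have "openin (prod_topology TH TH) (\<Union> (range UU))" using UU_open by auto
  ultimately show ?thesis using sub by (simp add: closedin_def)
qed

lemma TH_top_graph: "top_graph TH EH"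
  unfolding top_graph_def
proof (intro conjI)
  show "compact_space TH" by (rule TH_compact)
  show "Hausdorff_space TH" unfolding TH_def by (rule Hausdorff_space_subtopology[OF LT_Hausdorff])
  show "TH dim_le 0" unfolding TH_def by (rule dimension_le_subtopology[OF LT_dim0])
  show "second_countable TH" unfolding TH_def by (rule second_countable_subtopology[OF LT_sc])
  show "EH \<subseteq> topspace TH \<times> topspace TH" unfolding EH_def using topspace_TH by auto
  show "closedin (prod_topology TH TH) EH" by (rule EH_closed)
  show "\<forall>x\<in>topspace TH. (x, x) \<in> EH"
    unfolding EH_def limE_def using topspace_TH SsubL limV_in Frefl by blast
  show "\<forall>a b. (a, b) \<in> EH \<longrightarrow> (b, a) \<in> EH"
    unfolding EH_def limE_def using Fsym' by blast
qed

end

context ARC begin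

lemma subTH: "subtopology TH S = TH"
  unfolding TH_def subtopology_subtopology by simp

lemma S_conn: "tg_connected TH EH S"
  unfolding tg_connected_def subTH
proof (rule notI, elim exE conjE)
  fix A B assume A: "closedin TH A" and B: "closedin TH B" and ne: "A \<noteq> {}" "B \<noteq> {}"
    and dis: "A \<inter> B = {}" and un: "A \<union> B = S" and noe: "\<forall>a\<in>A. \<forall>b\<in>B. (a, b) \<notin> EH"
  have cA: "compactin TH A" and cB: "compactin TH B"
    using closedin_compact_space[OF TH_compact] A B by auto
  have cAB: "compactin (prod_topology TH TH) (A \<times> B)" using cA cB by (simp add: compactin_Times)
  have cov: "A \<times> B \<subseteq> \<Union> (range UU)"
  proof
    fix p assume "p \<in> A \<times> B"
    then obtain a b where ab: "p = (a, b)" "a \<in> A" "b \<in> B" by blast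
    have "a \<in> S" "b \<in> S" using ab un by auto
    moreover have "(a, b) \<notin> EH" using noe ab by blast
    ultimately obtain n where "(a n, b n) \<notin> gE (F n)" using notE_level by blast
    then show "p \<in> \<Union> (range UU)" using ab \<open>a \<in> S\<close> \<open>b \<in> S\<close> unfolding UU_def by auto
  qed
  have op: "\<forall>W\<in>range UU. openin (prod_topology TH TH) W" using UU_open by auto
  have cc: "\<forall>\<U>. (\<forall>U \<in> \<U>. openin (prod_topology TH TH) U) \<and> A \<times> B \<subseteq> \<Union>\<U>
          \<longrightarrow> (\<exists>\<F>. finite \<F> \<and> \<F> \<subseteq> \<U> \<and> A \<times> B \<subseteq> \<Union>\<F>)"
    using cAB unfolding compactin_def by (rule conjunct2)
  have "\<exists>\<F>. finite \<F> \<and> \<F> \<subseteq> range UU \<and> A \<times> B \<subseteq> \<Union>\<F>"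
    using mp[OF spec[OF cc, of "range UU"]] op cov by blast
  then obtain FF where FF: "finite FF" "FF \<subseteq> range UU" "A \<times> B \<subseteq> \<Union> FF"
    by blast
  obtain I where I: "finite I" "FF = UU ` I" using finite_subset_image[OF FF(1,2)] by blast
  define N where "N = Max (insert 0 I)"
  have iN: "i \<in> I \<Longrightarrow> i \<le> N" for i unfolding N_def using I(1) by simp
  have noN: "(a N, b N) \<notin> gE (F N)" if abAB: "a \<in> A" "b \<in> B" for a b
  proof
    assume e: "(a N, b N) \<in> gE (F N)"
    have "(a, b) \<in> \<Union> (UU ` I)" using FF(3) I(2) abAB by blast
    then obtain i where i: "i \<in> I" "(a, b) \<in> UU i" by blast
    have "a \<in> LV" "b \<in> LV" using abAB un SsubL by auto
    then have "(a i, b i) \<in> gE (F i)" using edge_down iN[OF i(1)] e by blast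
    then show False using i(2) unfolding UU_def by auto
  qed
  let ?PA = "(\<lambda>y. y N) ` A" and ?PB = "(\<lambda>y. y N) ` B"
  have "?PA \<union> ?PB = Q N" using projS[of N] un by (simp add: image_Un[symmetric])
  moreover have "?PA \<noteq> {}" "?PB \<noteq> {}" using ne by auto
  moreover have "?PA \<inter> ?PB = {}"
  proof (rule ccontr)
    assume "?PA \<inter> ?PB \<noteq> {}"
    then obtain a b where ab: "a \<in> A" "b \<in> B" "a N = b N" by auto
    have "a \<in> LV" using ab un SsubL by auto
    then have "(a N, a N) \<in> gE (F N)" using Frefl limV_in by blast
    then have "(a N, b N) \<in> gE (F N)" using ab(3) by simp
    then show False using noN ab by blast
  qed
  moreover have "\<forall>x\<in>?PA. \<forall>y\<in>?PB. (x, y) \<notin> gE (F N)" using noN by blast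
  ultimately have "\<exists>X Y. X \<noteq> {} \<and> Y \<noteq> {} \<and> X \<inter> Y = {} \<and> X \<union> Y = Q N
       \<and> (\<forall>a\<in>X. \<forall>b\<in>Y. (a,b) \<notin> gE (F N))" by (intro exI[of _ ?PA] exI[of _ ?PB]) simp
  then have "\<not> set_connected (gE (F N)) (Q N)" unfolding set_connected_def by simp
  then show False using Btw_conn[OF Ftree uvV] unfolding Q_def by blast
qed

end

context ARC begin

definition sd :: "(nat \<Rightarrow> nat) \<Rightarrow> (nat \<Rightarrow> nat) \<Rightarrow> nat \<Rightarrow> nat \<Rightarrow> bool" where
  "sd y w k t \<longleftrightarrow> (\<exists>C. C \<subseteq> gV (F k) - {y k} \<and> set_connected (gE (F k)) C \<and> w k \<in> C \<and> t \<in> C)"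

lemma sd_up:
  assumes y: "y \<in> LV" and w: "w \<in> LV" and z: "z \<in> LV" and s: "sd y w k (z k)" and kk: "k \<le> k'"
  shows "sd y w k' (z k')"
proof -
  obtain C where C: "C \<subseteq> gV (F k) - {y k}" "set_connected (gE (F k)) C" "w k \<in> C" "z k \<in> C"
    using s unfolding sd_def by blast
  let ?f = "bond step k (k' - k)"
  have D: "(?f, F k', F k) \<in> D" using bondD'[OF kk] .
  let ?P = "{x \<in> gV (F k'). ?f x \<in> C}"
  have Pc: "set_connected (gE (F k')) ?P"
    using pre_conn[OF D_props(1)[OF D] D_props(2)[OF D] D_props(7)[OF D]] C(1,2) by blast
  have fw: "?f (w k') = w k" and fz: "?f (z k') = z k" and fy: "?f (y k') = y k"
    using limV_bond'[OF w kk] limV_bond'[OF z kk] limV_bond'[OF y kk] by auto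
  have "?P \<subseteq> gV (F k') - {y k'}" using fy C(1) by auto
  moreover have "w k' \<in> ?P" "z k' \<in> ?P" using fw fz C(3,4) limV_in[OF w] limV_in[OF z] by auto
  ultimately show ?thesis unfolding sd_def using Pc by (intro exI[of _ ?P]) simp
qed

lemma sd_clash:
  assumes y: "y \<in> S" and s1: "sd y u k t1" and s2: "sd y v k t2"
    and t: "t1 = t2 \<or> (t1, t2) \<in> gE (F k)"
  shows False
proof -
  obtain C1 where C1: "C1 \<subseteq> gV (F k) - {y k}" "set_connected (gE (F k)) C1" "u k \<in> C1" "t1 \<in> C1"
    using s1 unfolding sd_def by blast
  obtain C2 where C2: "C2 \<subseteq> gV (F k) - {y k}" "set_connected (gE (F k)) C2" "v k \<in> C2" "t2 \<in> C2"
    using s2 unfolding sd_def by blast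
  have U: "set_connected (gE (F k)) (C1 \<union> C2)"
    using t conn_union[OF Fsym C1(2) C2(2) C1(4)] conn_union_edge[OF Fsym C1(2) C2(2) C1(4) C2(4)] C2(4)
    by blast
  have "Btw (F k) (u k) (v k) \<subseteq> C1 \<union> C2"
    by (rule Btw_le[OF _ U]) (use C1 C2 in auto)
  moreover have "y k \<in> Q k" using y unfolding S_def by blast
  ultimately show False using C1(1) C2(1) unfolding Q_def by blast
qed

lemma sd_open: "openin LT {x \<in> LV. sd y w k (x k)}"
  using cyl_open[of "\<lambda>t. sd y w k t" k] by simp

lemma cut:
  assumes yS: "y \<in> S" and yu: "y \<noteq> u" and yv: "y \<noteq> v"
  shows "\<not> tg_connected TH EH (S - {y})"
proof -
  have yL: "y \<in> LV" using yS SsubL by blast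
  define L where "L = {z \<in> S - {y}. \<exists>k. sd y u k (z k)}"
  define R where "R = {z \<in> S - {y}. \<exists>k. sd y v k (z k)}"
  have cover: "L \<union> R = S - {y}"
  proof
    show "L \<union> R \<subseteq> S - {y}" unfolding L_def R_def by auto
    show "S - {y} \<subseteq> L \<union> R"
    proof
      fix z assume z: "z \<in> S - {y}"
      then obtain k where k: "z k \<noteq> y k" by auto
      have zQ: "z k \<in> Btw (F k) (u k) (v k)" using z unfolding S_def Q_def by blast
      have ykV: "y k \<in> gV (F k)" using yL limV_in by blast
      from side_lemma[OF Ffg Fconn ykV zQ k uvV]
      have "sd y u k (z k) \<or> sd y v k (z k)" unfolding sd_def by blast
      then show "z \<in> L \<union> R" using z unfolding L_def R_def by blast
    qed
  qed
  have disj: "L \<inter> R = {}"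
  proof (rule ccontr)
    assume "L \<inter> R \<noteq> {}"
    then obtain z k1 k2 where z: "z \<in> S" "sd y u k1 (z k1)" "sd y v k2 (z k2)"
      unfolding L_def R_def by blast
    have zL: "z \<in> LV" using z(1) SsubL by blast
    have "sd y u (max k1 k2) (z (max k1 k2))" using sd_up[OF yL uL zL z(2)] by simp
    moreover have "sd y v (max k1 k2) (z (max k1 k2))" using sd_up[OF yL vL zL z(3)] by simp
    ultimately show False using sd_clash[OF yS] by blast
  qed
  have noedge: "\<forall>a\<in>L. \<forall>b\<in>R. (a, b) \<notin> EH"
  proof (intro ballI notI)
    fix a b assume a: "a \<in> L" and b: "b \<in> R" and e: "(a, b) \<in> EH"
    obtain k1 where k1: "sd y u k1 (a k1)" using a unfolding L_def by blast
    obtain k2 where k2: "sd y v k2 (b k2)" using b unfolding R_def by blast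
    have aL: "a \<in> LV" and bL: "b \<in> LV" using a b SsubL unfolding L_def R_def by auto
    have "sd y u (max k1 k2) (a (max k1 k2))" using sd_up[OF yL uL aL k1] by simp
    moreover have "sd y v (max k1 k2) (b (max k1 k2))" using sd_up[OF yL vL bL k2] by simp
    moreover have "(a (max k1 k2), b (max k1 k2)) \<in> gE (F (max k1 k2))"
      using e unfolding EH_def using limE_edge by blast
    ultimately show False using sd_clash[OF yS] by blast
  qed
  have Lne: "L \<noteq> {}"
  proof -
    obtain k where k: "u k \<noteq> y k" using yu by (metis ext)
    have "sd y u k (u k)" unfolding sd_def
      using k uvV conn_single[of "gE (F k)" "u k"] by (intro exI[of _ "{u k}"]) auto
    then show ?thesis using uS yu unfolding L_def by blast
  qed
  have Rne: "R \<noteq> {}"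
  proof -
    obtain k where k: "v k \<noteq> y k" using yv by (metis ext)
    have "sd y v k (v k)" unfolding sd_def
      using k uvV conn_single[of "gE (F k)" "v k"] by (intro exI[of _ "{v k}"]) auto
    then show ?thesis using vS yv unfolding R_def by blast
  qed
  define X where "X = subtopology TH (S - {y})"
  have X: "X = subtopology LT (S - {y})" unfolding X_def TH_def subtopology_subtopology
    by (metis Int_Diff Int_absorb)
  have tX: "topspace X = S - {y}"
  proof -
    have "topspace X = LV \<inter> (S - {y})" unfolding X by (simp add: topspace_LT)
    then show ?thesis using SsubL by blast
  qed
  have Lo: "openin X L"
  proof -
    have "L = (S - {y}) \<inter> \<Union> (range (\<lambda>k. {x \<in> LV. sd y u k (x k)}))"
      unfolding L_def using SsubL by auto
    moreover have "openin LT (\<Union> (range (\<lambda>k. {x \<in> LV. sd y u k (x k)})))"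
      using sd_open by auto
    then have "openin (subtopology LT (S - {y})) ((S - {y}) \<inter> \<Union> (range (\<lambda>k. {x \<in> LV. sd y u k (x k)})))"
      by (rule openin_subtopology_Int2)
    ultimately show ?thesis unfolding X by simp
  qed
  have Ro: "openin X R"
  proof -
    have "R = (S - {y}) \<inter> \<Union> (range (\<lambda>k. {x \<in> LV. sd y v k (x k)}))"
      unfolding R_def using SsubL by auto
    moreover have "openin LT (\<Union> (range (\<lambda>k. {x \<in> LV. sd y v k (x k)})))"
      using sd_open by auto
    then have "openin (subtopology LT (S - {y})) ((S - {y}) \<inter> \<Union> (range (\<lambda>k. {x \<in> LV. sd y v k (x k)})))"
      by (rule openin_subtopology_Int2)
    ultimately show ?thesis unfolding X by simp
  qed
  have Lc: "closedin X L"
  proof -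
    have "topspace X - L = R" using tX cover disj by auto
    then show ?thesis using Ro tX cover by (simp add: closedin_def) (use cover in blast)
  qed
  have Rc: "closedin X R"
  proof -
    have "topspace X - R = L" using tX cover disj by auto
    then show ?thesis using Lo tX cover by (simp add: closedin_def) (use cover in blast)
  qed
  show ?thesis unfolding tg_connected_def X_def[symmetric]
    using Lc Rc Lne Rne disj cover noedge by blast
qed

end

context ARC begin

lemma arc: "is_arc TH EH"
proof -
  have sub: "arc_endpoints TH EH \<subseteq> {u, v}"
  proof
    fix x assume x: "x \<in> arc_endpoints TH EH"
    then have "x \<in> S" "tg_connected TH EH (S - {x})" unfolding arc_endpoints_def topspace_TH by auto
    then show "x \<in> {u, v}" using cut by blast
  qed
  have fin: "finite (arc_endpoints TH EH)" using sub finite_subset by blast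
  have "card (arc_endpoints TH EH) \<le> card {u, v}" using sub by (intro card_mono) auto
  also have "\<dots> \<le> 2" by (cases "u = v") auto
  finally show ?thesis unfolding is_arc_def using TH_top_graph S_conn topspace_TH fin by simp
qed

lemma emb: "tg_embedding TH EH LT (limE F step) id"
  unfolding tg_embedding_def
proof (intro conjI)
  show "inj_on id (topspace TH)" by simp
  have "subtopology LT (id ` topspace TH) = TH" using topspace_TH unfolding TH_def by simp
  then show "embedding_map TH LT id" unfolding embedding_map_def by simp
  show "\<forall>a\<in>topspace TH. \<forall>b\<in>topspace TH. ((a, b) \<in> EH) = ((id a, id b) \<in> limE F step)"
    unfolding topspace_TH EH_def by auto
qed

lemma not_endpoint:
  assumes "e \<in> S" "e \<noteq> u" "e \<noteq> v"
  shows "\<not> is_endpoint LT (limE F step) e"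
proof
  assume ep: "is_endpoint LT (limE F step) e"
  have "\<forall>(TH' :: (nat \<Rightarrow> nat) topology) EH' f. is_arc TH' EH' \<and> tg_embedding TH' EH' LT (limE F step) f
      \<and> e \<in> f ` topspace TH' \<longrightarrow> (\<exists>h\<in>arc_endpoints TH' EH'. f h = e)"
    using ep unfolding is_endpoint_def by (rule conjunct2)
  moreover have "e \<in> id ` topspace TH" using assms(1) topspace_TH by simp
  ultimately have "(\<exists>h\<in>arc_endpoints TH EH. id h = e)" using arc emb by blast
  then have "e \<in> arc_endpoints TH EH" by simp
  then have "tg_connected TH EH (S - {e})" unfolding arc_endpoints_def topspace_TH by auto
  then show False using cut[OF assms] by blast
qed

end

context LS begin

lemma fibre_arg:
  assumes eL: "e \<in> LV" and fL: "ff \<in> LV" and vL: "v \<in> LV" and ef: "(e, ff) \<in> limE F step"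
    and mk: "m \<le> k" and gD: "(g, F m, G) \<in> D"
    and ge: "g (e m) = c" and gf: "g (ff m) = b" and gv: "g (v m) = a"
    and ab: "a \<noteq> b" and bc: "b \<noteq> c" and ca: "(c, a) \<in> gE G" and bcE: "(b, c) \<in> gE G" and cV: "c \<in> gV G"
  shows "e k \<in> Btw (F k) (ff k) (v k)"
proof -
  let ?psi = "g \<circ> bond step m (k - m)"
  have Dp: "(?psi, F k, G) \<in> D" using D_comp[OF bondD'[OF mk] gD] .
  have epi: "is_epi ?psi (F k) G" and mon: "monotone_epi ?psi (F k) G" and TG: "is_ftree G"
    and fG: "is_fgraph G" using D_props[OF Dp] by auto
  have pe: "?psi (e k) = c" and pf: "?psi (ff k) = b" and pv: "?psi (v k) = a"
    using limV_bond'[OF eL mk] limV_bond'[OF fL mk] limV_bond'[OF vL mk] ge gf gv by auto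
  have ekV: "e k \<in> gV (F k)" using limV_in[OF eL] .
  have efE: "(e k, ff k) \<in> gE (F k)" using limE_edge[OF ef] .
  show ?thesis unfolding Btw_def
  proof (intro CollectI conjI allI impI)
    show "e k \<in> gV (F k)" by fact
    fix C assume C: "C \<subseteq> gV (F k) \<and> set_connected (gE (F k)) C \<and> ff k \<in> C \<and> v k \<in> C"
    have Ci: "set_connected (gE G) (?psi ` C)" using img_conn[OF epi fG] C by blast
    have Csub: "?psi ` C \<subseteq> gV G" using C epi_into[OF epi] by blast
    have abC: "a \<in> ?psi ` C" "b \<in> ?psi ` C" using C pf pv by (metis imageI)+
    have "c \<in> ?psi ` C"
    proof (rule ccontr)
      assume "c \<notin> ?psi ` C"
      from cycle_lemma[OF Ci Csub cV this abC(1) abC(2) ab ca bcE] show False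
        using TG unfolding is_ftree_def by blast
    qed
    then obtain z where z: "z \<in> C" "?psi z = c" by blast
    show "e k \<in> C"
    proof (cases "z = e k")
      case True then show ?thesis using z by simp
    next
      case False
      have Phi: "set_connected (gE (F k)) (fibre ?psi (F k) c)"
        using mon cV unfolding monotone_epi_def by blast
      have eP: "e k \<in> fibre ?psi (F k) c" and zP: "z \<in> fibre ?psi (F k) c"
        unfolding fibre_def using ekV pe z C by auto
      obtain Cz p where Cz: "Cz \<subseteq> fibre ?psi (F k) c - {e k}" "set_connected (gE (F k)) Cz" "z \<in> Cz"
        "p \<in> Cz" "(e k, p) \<in> gE (F k)"
        using nbr_piece[OF Fsym Phi eP zP False] by blast
      show ?thesis
      proof (rule ccontr)
        assume ekC: "e k \<notin> C"
        have KK: "set_connected (gE (F k)) (C \<union> Cz)" using conn_union[OF Fsym _ Cz(2) z(1) Cz(3)] C by blast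
        have Ksub: "C \<union> Cz \<subseteq> gV (F k)" using C Cz(1) unfolding fibre_def by auto
        have ekK: "e k \<notin> C \<union> Cz" using ekC Cz(1) by auto
        have pc: "?psi p = c" using Cz(1,4) unfolding fibre_def by auto
        have fp: "ff k \<noteq> p" using pc pf bc by auto
        have "has_cycle (F k)"
          using cycle_lemma[OF KK Ksub ekV ekK _ _ fp efE Fsym'[OF Cz(5)]] C Cz(4) by blast
        then show False using Ftree unfolding is_ftree_def by blast
      qed
    qed
  qed
qed

end

theorem mainTheorem12:
  fixes K :: "fgraph set" and D :: "((nat \<Rightarrow> nat) \<times> fgraph \<times> fgraph) set"
    and F :: "nat \<Rightarrow> fgraph" and step :: "nat \<Rightarrow> nat \<Rightarrow> nat" and e :: "nat \<Rightarrow> nat"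
  assumes "proj_fraisse_family K D"
    and "\<forall>A\<in>K. is_ftree A"
    and "\<forall>(f,B,A)\<in>D. monotone_epi f B A \<and> weakly_coherent f B A"
    and "allows_splitting_edges K D"
    and "fraisse_sequence K D F step"
    and "is_endpoint (limT F step) (limE F step) e"
  shows "\<not> (\<exists>f\<in>limV F step. f \<noteq> e \<and> (e, f) \<in> limE F step)"
proof
  assume "\<exists>f\<in>limV F step. f \<noteq> e \<and> (e, f) \<in> limE F step"
  then obtain ff where ff: "ff \<in> limV F step" "ff \<noteq> e" "(e, ff) \<in> limE F step" by blast
  interpret LS K D F step using assms(1,2,3,5) by unfold_locales
  have eL: "e \<in> LV" using limE_mem[OF ff(3)] by blast
  obtain n0 where n0: "e n0 \<noteq> ff n0" using ff(2) by (metis ext)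
  define a where "a = e n0"
  define b where "b = ff n0"
  have abE: "(a, b) \<in> gE (F n0)" unfolding a_def b_def using limE_edge[OF ff(3)] .
  have ab: "a \<noteq> b" unfolding a_def b_def using n0 .
  have aV: "a \<in> gV (F n0)" and bV: "b \<in> gV (F n0)" unfolding a_def b_def using limV_in eL ff(1) by auto
  have "\<forall>G\<in>K. \<forall>a b. (a,b) \<in> gE G \<and> a \<noteq> b \<longrightarrow>
        (\<exists>c. c \<notin> gV G \<and> split_edge G a b c \<in> K
             \<and> (collapse c a, split_edge G a b c, G) \<in> D
             \<and> (collapse c b, split_edge G a b c, G) \<in> D)"
    using assms(4) unfolding allows_splitting_edges_def .
  then obtain c where c: "c \<notin> gV (F n0)" "split_edge (F n0) a b c \<in> K"
      "(collapse c a, split_edge (F n0) a b c, F n0) \<in> D"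
    using FK[of n0] abE ab by blast
  define G where "G = split_edge (F n0) a b c"
  have fsc: "\<forall>m f A. (f, A, F m) \<in> D \<longrightarrow>
        (\<exists>n\<ge>m. \<exists>g. (g, F n, A) \<in> D \<and> (\<forall>x\<in>gV (F n). f (g x) = bond step m (n - m) x))"
    using assms(5) unfolding fraisse_sequence_def by (elim conjE) assumption
  obtain m g where m: "m \<ge> n0" and gD: "(g, F m, G) \<in> D"
    and gc: "\<forall>x\<in>gV (F m). collapse c a (g x) = bond step n0 (m - n0) x"
    using fsc c(3) unfolding G_def by blast
  have ca: "c \<noteq> a" "c \<noteq> b" using c(1) aV bV by auto
  have GV: "gV G = gV (F n0) \<union> {c}" unfolding G_def split_edge_def gV_def by simp
  have GE: "gE G = (gE (F n0) - {(a,b),(b,a)}) \<union> {(a,c),(c,a),(c,b),(b,c),(c,c)}"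
    unfolding G_def split_edge_def gE_def by simp
  have abG: "(a, b) \<notin> gE G" using GE ca ab by auto
  have caG: "(c, a) \<in> gE G" and bcG: "(b, c) \<in> gE G" and cG: "c \<in> gV G" using GE GV by auto
  have epig: "is_epi g (F m) G" using D_props(1)[OF gD] .
  have emV: "e m \<in> gV (F m)" and fmV: "ff m \<in> gV (F m)" using limV_in eL ff(1) by auto
  have "collapse c a (g (e m)) = a" using gc emV limV_bond'[OF eL m] unfolding a_def by simp
  then have ge1: "g (e m) = c \<or> g (e m) = a" unfolding collapse_def by (auto split: if_splits)
  have "collapse c a (g (ff m)) = b" using gc fmV limV_bond'[OF ff(1) m] unfolding b_def by simp
  then have gf: "g (ff m) = b" unfolding collapse_def using ab by (auto split: if_splits)
  have "(g (e m), g (ff m)) \<in> gE G" using epi_edge[OF epig emV fmV limE_edge[OF ff(3)]] .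
  then have ge: "g (e m) = c" using ge1 gf abG by auto
  have "a \<in> gV G" using GV aV by auto
  then obtain w where w: "w \<in> gV (F m)" "g w = a" using epi_onto[OF epig] by blast
  obtain v where v: "v \<in> LV" "v m = w" using thread_full[OF w(1)] by blast
  interpret ARC K D F step ff v using ff(1) v(1) by unfold_locales
  have eQ: "e n \<in> Q n" for n
  proof -
    define k where "k = n + m"
    have mk: "m \<le> k" "n \<le> k" unfolding k_def by auto
    have "e k \<in> Btw (F k) (ff k) (v k)"
      using fibre_arg[OF eL ff(1) v(1) ff(3) mk(1) gD ge gf _ ab _ caG bcG cG] v(2) w(2) ca by auto
    from Btw_mono[OF D_props(1)[OF bondD'[OF mk(2)]] D_props(2)[OF bondD'[OF mk(2)]]
        D_props(7)[OF bondD'[OF mk(2)]] limV_in[OF ff(1)] limV_in[OF v(1)] this]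
    show ?thesis unfolding Q_def using limV_bond'[OF eL mk(2)] limV_bond'[OF ff(1) mk(2)]
        limV_bond'[OF v(1) mk(2)] by simp
  qed
  have eS: "e \<in> S" unfolding S_def using eL eQ by blast
  have ev: "e \<noteq> v"
  proof
    assume "e = v"
    then have "g (e m) = a" using v(2) w(2) by simp
    then show False using ge ca by simp
  qed
  show False using not_endpoint[OF eS ff(2)[symmetric] ev] assms(6) by simp
qed

end
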